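(* Let $(A,\mathfrak{m}_A)$ be a complete Noetherian local domain. Assume $A$ has a $\delta$-structure such that $\mathfrak{m}_A$ is generated by elements $p,x_1,\dots,x_n$ with $\delta(x_i)\in\mathfrak{m}_A$ for all $i$. Then for an ideal $I\subseteq A$ the following are equivalent: (1) $(A,I)$ is an orientable prism; (2) $I$ is generated by a distinguished element $d\in\mathfrak{m}_A$; (3) $I$ is generated by $p-f$ for some $f\in(x_1,\dots,x_n)$.
   Context: All rings are commutative $\mathbb{Z}_{(p)}$-algebras. A $\delta$-structure is $\delta:A\to A$ with $\delta(0)=\delta(1)=0$, $\delta(a+b)=\delta(a)+\delta(b)+\frac{a^p+b^p-(a+b)^p}{p}$, $\delta(ab)=a^p\delta(b)+b^p\delta(a)+p\delta(a)\delta(b)$, Frobenius lift $\varphi(a)=a^p+p\delta(a)$; $d$ is distinguished if $\delta(d)$ is a unit. A prism is a pair $(A,I)$ with $I$ locally free of rank one, $A$ derived $(p,I)$-complete and $p\in I+\varphi(I)A$; it is orientable if $I$ is principal. *)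

theory Defs
  imports Main "HOL-Computational_Algebra.Primes"
begin

definition is_ideal :: "'a::comm_ring_1 set \<Rightarrow> bool" where
  "is_ideal I \<longleftrightarrow> 0 \<in> I \<and> (\<forall>a\<in>I. \<forall>b\<in>I. a + b \<in> I) \<and> (\<forall>r. \<forall>a\<in>I. r * a \<in> I)"

definition gen_ideal :: "'a::comm_ring_1 set \<Rightarrow> 'a set" where
  "gen_ideal S = {y. \<exists>F c. finite F \<and> F \<subseteq> S \<and> y = (\<Sum>s\<in>F. c s * s)}"

definition ideal_pow :: "'a::comm_ring_1 set \<Rightarrow> nat \<Rightarrow> 'a set" where
  "ideal_pow J n = gen_ideal {y. \<exists>f. (\<forall>i<n. f i \<in> J) \<and> y = (\<Prod>i<n. f i)}"

definition unit_elem :: "'a::comm_ring_1 \<Rightarrow> bool" where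
  "unit_elem a \<longleftrightarrow> (\<exists>b. a * b = 1)"

definition noetherian_ring :: "'a::comm_ring_1 itself \<Rightarrow> bool" where
  "noetherian_ring _ \<longleftrightarrow> (\<forall>I::'a set. is_ideal I \<longrightarrow> (\<exists>F. finite F \<and> I = gen_ideal F))"

definition local_ring_with :: "'a::comm_ring_1 set \<Rightarrow> bool" where
  "local_ring_with m \<longleftrightarrow> is_ideal m \<and> m \<noteq> UNIV \<and> (\<forall>a. a \<notin> m \<longrightarrow> unit_elem a)"

definition adically_complete :: "'a::comm_ring_1 set \<Rightarrow> bool" where
  "adically_complete J \<longleftrightarrow>
     (\<forall>a::nat \<Rightarrow> 'a. (\<forall>k. a (Suc k) - a k \<in> ideal_pow J k) \<longrightarrow>
        (\<exists>!x. \<forall>k. x - a k \<in> ideal_pow J k))"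

definition Zp_local_algebra :: "nat \<Rightarrow> 'a::comm_ring_1 itself \<Rightarrow> bool" where
  "Zp_local_algebra p _ \<longleftrightarrow> (\<forall>k::int. \<not> int p dvd k \<longrightarrow> unit_elem (of_int k :: 'a))"

(* delta-structure; (a^p + b^p - (a+b)^p)/p is written with its integer coefficients *)
definition delta_structure :: "nat \<Rightarrow> ('a::comm_ring_1 \<Rightarrow> 'a) \<Rightarrow> bool" where
  "delta_structure p \<delta> \<longleftrightarrow> \<delta> 0 = 0 \<and> \<delta> 1 = 0 \<and>
     (\<forall>a b. \<delta> (a + b) = \<delta> a + \<delta> b
              - (\<Sum>k\<in>{1..<p}. of_nat ((p choose k) div p) * a ^ k * b ^ (p - k))) \<and>
     (\<forall>a b. \<delta> (a * b) = a ^ p * \<delta> b + b ^ p * \<delta> a + of_nat p * \<delta> a * \<delta> b)"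

definition frob :: "nat \<Rightarrow> ('a::comm_ring_1 \<Rightarrow> 'a) \<Rightarrow> 'a \<Rightarrow> 'a" where
  "frob p \<delta> a = a ^ p + of_nat p * \<delta> a"

definition distinguished :: "('a::comm_ring_1 \<Rightarrow> 'a) \<Rightarrow> 'a \<Rightarrow> bool" where
  "distinguished \<delta> d \<longleftrightarrow> unit_elem (\<delta> d)"

(* Derived f-completeness of A (Stacks 091S): T(A,f) = R lim (... --f--> A --f--> A) vanishes,
   i.e. lim = lim^1 = 0, i.e. the map (x_n) |-> (x_n - f x_(n+1)) on prod_n A is bijective. *)
definition derived_complete_elem :: "'a::comm_ring_1 \<Rightarrow> bool" where
  "derived_complete_elem f \<longleftrightarrow>
     (\<forall>y::nat \<Rightarrow> 'a. \<exists>!x::nat \<Rightarrow> 'a. \<forall>n. x n - f * x (Suc n) = y n)"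

definition derived_complete :: "'a::comm_ring_1 set \<Rightarrow> bool" where
  "derived_complete J \<longleftrightarrow> (\<forall>f\<in>J. derived_complete_elem f)"

(* I is (Zariski-)locally free of rank one: there are f_1..f_k generating the unit ideal
   such that I_(f_i) is free of rank one over A_(f_i) with basis g_i/1, written without
   localisations. *)
definition locally_free_rank_one :: "'a::comm_ring_1 set \<Rightarrow> bool" where
  "locally_free_rank_one I \<longleftrightarrow>
     (\<exists>F::'a set. finite F \<and> 1 \<in> gen_ideal F \<and>
        (\<forall>f\<in>F. \<exists>g\<in>I.
           (\<forall>y\<in>I. \<exists>N c. f ^ N * y = c * g) \<and>
           (\<forall>c. (\<exists>M. f ^ M * (c * g) = 0) \<longrightarrow> (\<exists>K. f ^ K * c = 0))))"

definition prism :: "nat \<Rightarrow> ('a::comm_ring_1 \<Rightarrow> 'a) \<Rightarrow> 'a set \<Rightarrow> bool" where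
  "prism p \<delta> I \<longleftrightarrow> is_ideal I \<and> locally_free_rank_one I \<and>
     derived_complete (gen_ideal (insert (of_nat p) I)) \<and>
     of_nat p \<in> gen_ideal (I \<union> frob p \<delta> ` I)"

definition orientable_prism :: "nat \<Rightarrow> ('a::comm_ring_1 \<Rightarrow> 'a) \<Rightarrow> 'a set \<Rightarrow> bool" where
  "orientable_prism p \<delta> I \<longleftrightarrow> prism p \<delta> I \<and> (\<exists>d. I = gen_ideal {d})"

end

theory Submission
  imports Defs "HOL-Computational_Algebra.Primes"
begin

lemma ideal_diff: "is_ideal I \<Longrightarrow> a \<in> I \<Longrightarrow> b \<in> I \<Longrightarrow> a - b \<in> I"
  unfolding is_ideal_def by (metis add_uminus_conv_diff mult_minus1)

lemma ideal_multR: "is_ideal I \<Longrightarrow> a \<in> I \<Longrightarrow> a * r \<in> I"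
  unfolding is_ideal_def by (metis mult.commute)

lemma ideal_multL: "is_ideal I \<Longrightarrow> a \<in> I \<Longrightarrow> r * a \<in> I"
  unfolding is_ideal_def by blast

lemma ideal_add: "is_ideal I \<Longrightarrow> a \<in> I \<Longrightarrow> b \<in> I \<Longrightarrow> a + b \<in> I"
  unfolding is_ideal_def by blast

lemma ideal_zero: "is_ideal I \<Longrightarrow> 0 \<in> I"
  unfolding is_ideal_def by blast

lemma ideal_sum: assumes "is_ideal I" "finite F" "\<And>s. s \<in> F \<Longrightarrow> g s \<in> I" shows "sum g F \<in> I"
  using assms(2,3)
  by (induction F rule: finite_induct) (auto intro: ideal_add ideal_zero assms(1))

lemma ideal_one_UNIV: "is_ideal I \<Longrightarrow> 1 \<in> I \<Longrightarrow> I = UNIV"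
  using ideal_multL[of I 1] by force

lemma gen_ideal_ideal: "is_ideal (gen_ideal S)"
  unfolding is_ideal_def
proof (intro conjI ballI allI)
  show "0 \<in> gen_ideal S" unfolding gen_ideal_def by (rule CollectI, rule exI[of _ "{}"]) auto
next
  fix a b assume "a \<in> gen_ideal S" "b \<in> gen_ideal S"
  then obtain F1 c1 F2 c2 where 1: "finite F1" "F1 \<subseteq> S" "a = (\<Sum>s\<in>F1. c1 s * s)"
    and 2: "finite F2" "F2 \<subseteq> S" "b = (\<Sum>s\<in>F2. c2 s * s)" unfolding gen_ideal_def by blast
  define c where "c s = (if s \<in> F1 then c1 s else 0) + (if s \<in> F2 then c2 s else 0)" for s
  have "(\<Sum>s\<in>F1 \<union> F2. c s * s) = (\<Sum>s\<in>F1 \<union> F2. (if s \<in> F1 then c1 s * s else 0))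
     + (\<Sum>s\<in>F1 \<union> F2. (if s \<in> F2 then c2 s * s else 0))"
    unfolding c_def sum.distrib[symmetric] by (rule sum.cong) (auto simp: distrib_right)
  also have "\<dots> = a + b"
    using 1 2 by (simp add: sum.inter_restrict[symmetric] Int_absorb1 Int_absorb2 Int_commute)
  finally show "a + b \<in> gen_ideal S" unfolding gen_ideal_def using 1 2
    by (intro CollectI exI[of _ "F1 \<union> F2"] exI[of _ c]) auto
next
  fix r a assume "a \<in> gen_ideal S"
  then obtain F c where "finite F" "F \<subseteq> S" "a = (\<Sum>s\<in>F. c s * s)" unfolding gen_ideal_def by blast
  then show "r * a \<in> gen_ideal S" unfolding gen_ideal_def
    by (intro CollectI exI[of _ F] exI[of _ "\<lambda>s. r * c s"]) (auto simp: sum_distrib_left mult.assoc)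
qed

lemma gen_ideal_subset: "is_ideal J \<Longrightarrow> S \<subseteq> J \<Longrightarrow> gen_ideal S \<subseteq> J"
proof
  fix y assume J: "is_ideal J" "S \<subseteq> J" and "y \<in> gen_ideal S"
  then obtain F c where "finite F" "F \<subseteq> S" "y = (\<Sum>s\<in>F. c s * s)" unfolding gen_ideal_def by blast
  then show "y \<in> J" using J by (auto intro!: ideal_sum ideal_multL)
qed

lemma gen_ideal_base: "S \<subseteq> gen_ideal S"
proof
  fix s assume "s \<in> S"
  then show "s \<in> gen_ideal S" unfolding gen_ideal_def
    by (intro CollectI exI[of _ "{s}"] exI[of _ "\<lambda>_. 1"]) auto
qed

lemma gen_ideal_mono: "S \<subseteq> T \<Longrightarrow> gen_ideal S \<subseteq> gen_ideal T"
  using gen_ideal_subset[OF gen_ideal_ideal] gen_ideal_base by blast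

lemma gen_ideal_single: "gen_ideal {d} = range (\<lambda>r. r * d)"
proof
  have "is_ideal (range (\<lambda>r. r * d))" unfolding is_ideal_def
    by (auto simp: distrib_right[symmetric] intro: range_eqI[of _ _ 0]) (metis mult.assoc rangeI)
  then show "gen_ideal {d} \<subseteq> range (\<lambda>r. r * d)"
    by (rule gen_ideal_subset) (auto intro: range_eqI[of _ _ 1])
  show "range (\<lambda>r. r * d) \<subseteq> gen_ideal {d}"
    using gen_ideal_base[of "{d}"] ideal_multL[OF gen_ideal_ideal] by blast
qed

lemma gen_ideal_insert:
  assumes "y \<in> gen_ideal (insert a X)"
  shows "\<exists>r g. g \<in> gen_ideal X \<and> y = r * a + g"
proof -
  obtain F c where F: "finite F" "F \<subseteq> insert a X" "y = (\<Sum>s\<in>F. c s * s)"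
    using assms unfolding gen_ideal_def by blast
  have g: "(\<Sum>s\<in>F - {a}. c s * s) \<in> gen_ideal X"
    unfolding gen_ideal_def using F by (intro CollectI exI[of _ "F - {a}"] exI[of _ c]) auto
  show ?thesis
  proof (cases "a \<in> F")
    case True
    then have "y = c a * a + (\<Sum>s\<in>F - {a}. c s * s)" using F by (simp add: sum.remove)
    then show ?thesis using g by blast
  next
    case False
    then have "y = 0 * a + (\<Sum>s\<in>F - {a}. c s * s)" using F by simp
    then show ?thesis using g by blast
  qed
qed

lemma delta_add_mod:
  assumes D: "delta_structure p \<delta>" and m: "is_ideal m" and a: "a \<in> m"
  shows "\<delta> (a + b) - \<delta> a - \<delta> b \<in> m"
proof -
  have e: "\<delta> (a + b) - \<delta> a - \<delta> b = - (\<Sum>k\<in>{1..<p}. of_nat ((p choose k) div p) * a ^ k * b ^ (p - k))"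
    using D unfolding delta_structure_def by (simp add: algebra_simps)
  have "(\<Sum>k\<in>{1..<p}. of_nat ((p choose k) div p) * a ^ k * b ^ (p - k)) \<in> m"
  proof (rule ideal_sum[OF m], simp)
    fix k assume "k \<in> {1..<p}"
    then have "a ^ k = a * a ^ (k - 1)" by (simp add: power_eq_if)
    then have "a ^ k \<in> m" using ideal_multR[OF m a] by simp
    then show "of_nat ((p choose k) div p) * a ^ k * b ^ (p - k) \<in> m"
      using m by (metis ideal_multL ideal_multR)
  qed
  then show ?thesis unfolding e using ideal_diff[OF m ideal_zero[OF m]] by (metis diff_0)
qed

lemma frob_mult: "delta_structure p \<delta> \<Longrightarrow> frob p \<delta> (a * b) = frob p \<delta> a * frob p \<delta> b"
  unfolding delta_structure_def frob_def by (simp add: algebra_simps power_mult_distrib)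

lemma binom_nat:
  assumes "prime p"
  shows "(k + 1) ^ p = k ^ p + 1 + (\<Sum>j\<in>{1..<p}. (p choose j) * k ^ j)"
proof -
  have p1: "p \<ge> 1" using assms prime_ge_1_nat by blast
  have "(k + 1::nat) ^ p = (\<Sum>j\<le>p. (p choose j) * k ^ j)"
    using binomial_ring[of k 1 p] by simp
  also have "{..p} = insert p (insert 0 {1..<p})" using p1 by auto
  also have "(\<Sum>j\<in>insert p (insert 0 {1..<p}). (p choose j) * k ^ j)
      = k ^ p + 1 + (\<Sum>j\<in>{1..<p}. (p choose j) * k ^ j)" using p1 by simp
  finally show ?thesis .
qed

definition Ecount :: "nat \<Rightarrow> nat \<Rightarrow> nat" where
  "Ecount p k = (\<Sum>i<k. \<Sum>j\<in>{1..<p}. ((p choose j) div p) * i ^ j)"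

lemma Ecount_eq:
  assumes "prime p"
  shows "p * Ecount p k + k = k ^ p"
proof (induction k)
  case 0
  then show ?case using assms prime_gt_0_nat by (simp add: Ecount_def)
next
  case (Suc k)
  have dv: "p * ((p choose j) div p) = p choose j" if "j \<in> {1..<p}" for j
    using dvd_choose_prime[of j p] that assms by auto
  have "p * Ecount p (Suc k) = p * Ecount p k + (\<Sum>j\<in>{1..<p}. p * ((p choose j) div p) * k ^ j)"
    by (simp add: Ecount_def sum_distrib_left algebra_simps)
  also have "(\<Sum>j\<in>{1..<p}. p * ((p choose j) div p) * k ^ j) = (\<Sum>j\<in>{1..<p}. (p choose j) * k ^ j)"
    by (rule sum.cong) (auto simp: dv)
  finally show ?case using Suc binom_nat[OF assms, of k] by simp
qed

lemma delta_of_nat: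
  assumes D: "delta_structure p \<delta>"
  shows "\<delta> (of_nat k) = - of_nat (Ecount p k)"
proof (induction k)
  case 0
  then show ?case using D by (simp add: delta_structure_def Ecount_def)
next
  case (Suc k)
  have "\<delta> (of_nat (Suc k)) = \<delta> (of_nat k + 1)" by (simp add: add.commute)
  also have "\<dots> = \<delta> (of_nat k) - (\<Sum>j\<in>{1..<p}. of_nat ((p choose j) div p) * of_nat k ^ j)"
    using D unfolding delta_structure_def by simp
  also have "\<dots> = - of_nat (Ecount p (Suc k))"
    using Suc by (simp add: Ecount_def)
  finally show ?case .
qed

lemma delta_p:
  assumes D: "delta_structure p \<delta>" and pr: "prime p"
  shows "\<delta> (of_nat p) = 1 - of_nat p ^ (p - 1)"
proof -
  have p1: "p \<ge> 1" using pr prime_ge_1_nat by blast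
  have "p * Ecount p p + p = p * p ^ (p - 1)" using Ecount_eq[OF pr, of p] p1
    by (metis power_eq_if not_one_le_zero)
  then have "Ecount p p + 1 = p ^ (p - 1)" using p1
    by (metis add_mult_distrib2 mult_cancel_left nat_mult_1_right not_one_le_zero)
  then have "of_nat (Ecount p p) = (of_nat p ^ (p - 1) :: 'a) - 1"
    by (metis add_diff_cancel_right' of_nat_1 of_nat_add of_nat_power)
  then show ?thesis using delta_of_nat[OF D, of p] by simp
qed

lemma ip_ideal: "is_ideal (ideal_pow J k)"
  unfolding ideal_pow_def by (rule gen_ideal_ideal)

lemma ip_pow: "f \<in> J \<Longrightarrow> f ^ k \<in> ideal_pow J k"
  unfolding ideal_pow_def
  by (rule subsetD[OF gen_ideal_base]) (auto intro!: exI[of _ "\<lambda>_. f"])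

lemma ip_Suc: "ideal_pow J (Suc k) \<subseteq> ideal_pow J k"
  unfolding ideal_pow_def[of J "Suc k"]
proof (rule gen_ideal_subset[OF ip_ideal], safe)
  fix g assume "\<forall>i<Suc k. g i \<in> J"
  then have "(\<Prod>i<k. g i) \<in> ideal_pow J k" unfolding ideal_pow_def
    by (intro subsetD[OF gen_ideal_base]) (auto intro!: exI[of _ g])
  then show "(\<Prod>i<Suc k. g i) \<in> ideal_pow J k"
    by (simp add: ideal_multR[OF ip_ideal])
qed

lemma sep:
  assumes "adically_complete m" "\<And>k. z \<in> ideal_pow m k"
  shows "z = 0"
proof -
  have h: "\<forall>a::nat\<Rightarrow>'a. (\<forall>k. a (Suc k) - a k \<in> ideal_pow m k) \<longrightarrow> (\<exists>!x. \<forall>k. x - a k \<in> ideal_pow m k)"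
    using assms(1) unfolding adically_complete_def .
  have z: "\<forall>k. (\<lambda>_. 0::'a) (Suc k) - (\<lambda>_. 0) k \<in> ideal_pow m k" by (simp add: ideal_zero[OF ip_ideal])
  have "\<exists>!x. \<forall>k. x - (\<lambda>_. 0::'a) k \<in> ideal_pow m k"
    using spec[OF h, of "\<lambda>_. 0"] z by simp
  moreover have "\<forall>k. 0 - (\<lambda>_. 0) k \<in> ideal_pow m k" by (simp add: ideal_zero[OF ip_ideal])
  moreover have "\<forall>k. z - (\<lambda>_. 0) k \<in> ideal_pow m k" using assms(2) by simp
  ultimately show ?thesis by blast
qed

lemma dc_elem:
  assumes ac: "adically_complete m" and f: "f \<in> m"
  shows "derived_complete_elem f"
  unfolding derived_complete_elem_def
proof
  fix y :: "nat \<Rightarrow> 'a"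
  define s where "s n K = (\<Sum>k<K. f ^ k * y (n + k))" for n K
  have "\<exists>x. \<forall>K. x - s n K \<in> ideal_pow m K" for n
  proof -
    have "\<forall>K. s n (Suc K) - s n K \<in> ideal_pow m K"
      unfolding s_def by (simp add: ideal_multR[OF ip_ideal ip_pow[OF f]])
    then show ?thesis using ac unfolding adically_complete_def by blast
  qed
  then obtain X where X: "\<And>n K. X n - s n K \<in> ideal_pow m K" by metis
  have shift: "s n (Suc K) = y n + f * s (Suc n) K" for n K
    unfolding s_def sum.lessThan_Suc_shift by (simp add: sum_distrib_left mult.assoc)
  show "\<exists>!x. \<forall>n. x n - f * x (Suc n) = y n"
  proof (rule ex_ex1I)
    show "\<exists>x. \<forall>n. x n - f * x (Suc n) = y n"
    proof (intro exI allI)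
      fix n
      have "X n - f * X (Suc n) - y n \<in> ideal_pow m K" for K
      proof -
        have e: "X n - f * X (Suc n) - y n = (X n - s n (Suc K)) - f * (X (Suc n) - s (Suc n) K)"
          by (simp add: shift algebra_simps)
        have a1: "X n - s n (Suc K) \<in> ideal_pow m K" using X[of n "Suc K"] ip_Suc by blast
        have a2: "f * (X (Suc n) - s (Suc n) K) \<in> ideal_pow m K"
          by (rule ideal_multL[OF ip_ideal X])
        show ?thesis unfolding e by (rule ideal_diff[OF ip_ideal a1 a2])
      qed
      then show "X n - f * X (Suc n) = y n" using sep[OF ac, of "X n - f * X (Suc n) - y n"] by simp
    qed
  next
    fix x1 x2 assume h1: "\<forall>n. x1 n - f * x1 (Suc n) = y n" and h2: "\<forall>n. x2 n - f * x2 (Suc n) = y n"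
    define w where "w n = x1 n - x2 n" for n
    have wr: "w n = f * w (Suc n)" for n
    proof -
      have "x1 n = y n + f * x1 (Suc n)" "x2 n = y n + f * x2 (Suc n)"
        using h1 h2 by (metis diff_add_cancel add.commute)+
      then show ?thesis unfolding w_def by (simp add: algebra_simps)
    qed
    have wk: "w n = f ^ k * w (n + k)" for k n
    proof (induction k arbitrary: n)
      case 0 then show ?case by simp
    next
      case (Suc k)
      have "w n = f ^ k * w (n + k)" by (rule Suc.IH)
      also have "\<dots> = f ^ k * (f * w (Suc (n + k)))" using wr[of "n + k"] by simp
      also have "\<dots> = f ^ Suc k * w (n + Suc k)" by (simp add: mult.assoc mult.commute)
      finally show ?case .
    qed
    have "w n = 0" for n
      by (rule sep[OF ac]) (subst wk, rule ideal_multR[OF ip_ideal ip_pow[OF f]])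
    then show "x1 = x2" unfolding w_def by auto
  qed
qed

lemma unit_notin: "is_ideal m \<Longrightarrow> m \<noteq> UNIV \<Longrightarrow> unit_elem a \<Longrightarrow> a \<notin> m"
  unfolding unit_elem_def using ideal_multR ideal_one_UNIV by metis

lemma one_minus_notin: "is_ideal m \<Longrightarrow> m \<noteq> UNIV \<Longrightarrow> a \<in> m \<Longrightarrow> 1 - a \<notin> m"
  using ideal_add ideal_one_UNIV by (metis diff_add_cancel)

lemma delta_mult_in:
  assumes D: "delta_structure p \<delta>" and m: "is_ideal m" and "\<delta> b \<in> m" and "b \<in> m" and "p \<ge> 1"
  shows "\<delta> (a * b) \<in> m"
proof -
  have e: "\<delta> (a * b) = a ^ p * \<delta> b + b ^ p * \<delta> a + of_nat p * \<delta> a * \<delta> b"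
    using D unfolding delta_structure_def by blast
  have "b ^ p = b * b ^ (p - 1)" using assms(5) by (simp add: power_eq_if)
  then have "b ^ p \<in> m" using ideal_multR[OF m assms(4)] by simp
  then show ?thesis unfolding e using assms(3)
    by (intro ideal_add[OF m] ideal_multL[OF m] ideal_multR[OF m])
qed

lemma delta_gen:
  assumes D: "delta_structure p \<delta>" and m: "is_ideal m" and p1: "p \<ge> 1"
    and X: "X \<subseteq> m" and dX: "\<And>s. s \<in> X \<Longrightarrow> \<delta> s \<in> m" and f: "f \<in> gen_ideal X"
  shows "\<delta> f \<in> m"
proof -
  obtain F c where F: "finite F" "F \<subseteq> X" "f = (\<Sum>s\<in>F. c s * s)"
    using f unfolding gen_ideal_def by blast
  have "F \<subseteq> X \<Longrightarrow> \<delta> (\<Sum>s\<in>F. c s * s) \<in> m \<and> (\<Sum>s\<in>F. c s * s) \<in> m"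
    using F(1)
  proof (induction F rule: finite_induct)
    case empty
    then show ?case using D m by (simp add: delta_structure_def ideal_zero)
  next
    case (insert s F)
    have sm: "s \<in> m" "\<delta> s \<in> m" using insert X dX by auto
    have csm: "c s * s \<in> m" by (rule ideal_multL[OF m sm(1)])
    have dcs: "\<delta> (c s * s) \<in> m"
      by (rule delta_mult_in[OF D m sm(2) sm(1) p1])
    have IH: "\<delta> (\<Sum>s\<in>F. c s * s) \<in> m" "(\<Sum>s\<in>F. c s * s) \<in> m" using insert by auto
    have "\<delta> (c s * s + (\<Sum>s\<in>F. c s * s)) - \<delta> (c s * s) - \<delta> (\<Sum>s\<in>F. c s * s) \<in> m"
      by (rule delta_add_mod[OF D m csm])
    then have "\<delta> (c s * s + (\<Sum>s\<in>F. c s * s)) \<in> m"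
      using dcs IH ideal_add[OF m] by (metis diff_add_cancel)
    then show ?case using insert csm IH ideal_add[OF m] by simp
  qed
  then show ?thesis using F by simp
qed

lemma pow_in: assumes "is_ideal m" "a \<in> m" "k \<ge> 1" shows "a ^ k \<in> m"
proof -
  have "a ^ k = a * a ^ (k - 1)" using assms(3) by (simp add: power_eq_if)
  then show ?thesis using ideal_multR[OF assms(1,2)] by simp
qed

theorem lemma5p1:
  fixes p :: nat and \<delta> :: "'a::idom \<Rightarrow> 'a" and m :: "'a set"
    and n :: nat and x :: "nat \<Rightarrow> 'a" and I :: "'a set"
  assumes "prime p"
    and "Zp_local_algebra p TYPE('a)"
    and "noetherian_ring TYPE('a)"
    and "local_ring_with m"
    and "adically_complete m"
    and "delta_structure p \<delta>"
    and "m = gen_ideal (insert (of_nat p) (x ` {1..n}))"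
    and "\<forall>i\<in>{1..n}. \<delta> (x i) \<in> m"
    and "is_ideal I"
  shows "(orientable_prism p \<delta> I \<longleftrightarrow> (\<exists>d\<in>m. distinguished \<delta> d \<and> I = gen_ideal {d}))
       \<and> ((\<exists>d\<in>m. distinguished \<delta> d \<and> I = gen_ideal {d}) \<longleftrightarrow>
            (\<exists>f\<in>gen_ideal (x ` {1..n}). I = gen_ideal {of_nat p - f}))"
proof -
  note pr = assms(1) and ac = assms(5) and D = assms(6) and mdef = assms(7) and II = assms(9)
  define X where "X = x ` {1..n}"
  have mI: "is_ideal m" and mU: "m \<noteq> UNIV" and loc: "\<And>a. a \<notin> m \<Longrightarrow> unit_elem a"
    using assms(4) unfolding local_ring_with_def by auto
  have p2: "p \<ge> 2" by (rule prime_ge_2_nat[OF pr])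
  then have p1: "p \<ge> 1" by simp
  have mX: "m = gen_ideal (insert (of_nat p) X)" unfolding X_def by (rule mdef)
  have pm: "of_nat p \<in> m" unfolding mX by (rule subsetD[OF gen_ideal_base]) simp
  have Xm0: "X \<subseteq> m" unfolding mX by (rule subset_trans[OF _ gen_ideal_base]) (rule subset_insertI)
  have Xm: "gen_ideal X \<subseteq> m" unfolding mX by (rule gen_ideal_mono) (rule subset_insertI)
  have dX: "\<And>s. s \<in> X \<Longrightarrow> \<delta> s \<in> m" using assms(8) unfolding X_def by blast
  have dgen: "\<And>f. f \<in> gen_ideal X \<Longrightarrow> \<delta> f \<in> m"
    by (rule delta_gen[OF D mI p1 Xm0 dX])
  have dp: "\<delta> (of_nat p) \<notin> m"
  proof -
    have "(of_nat p :: 'a) ^ (p - 1) \<in> m" by (rule pow_in[OF mI pm]) (use p2 in simp)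
    then show ?thesis unfolding delta_p[OF D pr] by (rule one_minus_notin[OF mI mU])
  qed
  define P2 where "P2 \<longleftrightarrow> (\<exists>d\<in>m. distinguished \<delta> d \<and> I = gen_ideal {d})"
  have "orientable_prism p \<delta> I \<Longrightarrow> P2"
  proof -
    assume op: "orientable_prism p \<delta> I"
    then obtain d where Id: "I = gen_ideal {d}" unfolding orientable_prism_def by blast
    have dc: "derived_complete (gen_ideal (insert (of_nat p) I))"
      and pI: "of_nat p \<in> gen_ideal (I \<union> frob p \<delta> ` I)"
      using op unfolding orientable_prism_def prism_def by auto
    have dm: "d \<in> m"
    proof (rule ccontr)
      assume "d \<notin> m"
      then obtain e where "d * e = 1" using loc unfolding unit_elem_def by blast
      then have "1 = e * d" by (simp add: mult.commute)
      then have "1 \<in> I" unfolding Id gen_ideal_single by (metis rangeI)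
      then have "1 \<in> gen_ideal (insert (of_nat p) I)" using gen_ideal_base by blast
      then have "derived_complete_elem (1::'a)" using dc unfolding derived_complete_def by blast
      then have "\<forall>y::nat\<Rightarrow>'a. \<exists>!x::nat\<Rightarrow>'a. \<forall>n. x n - 1 * x (Suc n) = y n"
        unfolding derived_complete_elem_def .
      then have u: "\<exists>!x::nat\<Rightarrow>'a. \<forall>n. x n - 1 * x (Suc n) = 0" by (rule spec)
      have a0: "\<forall>n. (\<lambda>_. 0::'a) n - 1 * (\<lambda>_. 0) (Suc n) = 0" by simp
      have a1: "\<forall>n. (\<lambda>_. 1::'a) n - 1 * (\<lambda>_. 1) (Suc n) = 0" by simp
      have t0: "(THE x::nat\<Rightarrow>'a. \<forall>n. x n - 1 * x (Suc n) = 0) = (\<lambda>_. 0)"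
        by (rule the1_equality[OF u]) simp
      have t1: "(THE x::nat\<Rightarrow>'a. \<forall>n. x n - 1 * x (Suc n) = 0) = (\<lambda>_. 1)"
        by (rule the1_equality[OF u]) simp
      have "(\<lambda>_::nat. 0::'a) = (\<lambda>_. 1)" using t0 t1 by simp
      then have "(0::'a) = 1" by (rule fun_cong)
      then show False by simp
    qed
    define J where "J = {a * d + b * frob p \<delta> d | a b. True}"
    have JI: "is_ideal J" unfolding is_ideal_def J_def
    proof (intro conjI ballI allI)
      show "0 \<in> {a * d + b * frob p \<delta> d | a b. True}" by (rule CollectI, rule exI[of _ 0], rule exI[of _ 0]) simp
    next
      fix u v assume "u \<in> {a * d + b * frob p \<delta> d | a b. True}" "v \<in> {a * d + b * frob p \<delta> d | a b. True}"
      then obtain a b a' b' where "u = a * d + b * frob p \<delta> d" "v = a' * d + b' * frob p \<delta> d" by blast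
      then have "u + v = (a + a') * d + (b + b') * frob p \<delta> d" by (simp add: algebra_simps)
      then show "u + v \<in> {a * d + b * frob p \<delta> d | a b. True}" by blast
    next
      fix r u assume "u \<in> {a * d + b * frob p \<delta> d | a b. True}"
      then obtain a b where "u = a * d + b * frob p \<delta> d" by blast
      then have "r * u = (r * a) * d + (r * b) * frob p \<delta> d" by (simp add: algebra_simps)
      then show "r * u \<in> {a * d + b * frob p \<delta> d | a b. True}" by blast
    qed
    have "I \<union> frob p \<delta> ` I \<subseteq> J"
    proof
      fix y assume "y \<in> I \<union> frob p \<delta> ` I"
      then consider r where "y = r * d" | r where "y = frob p \<delta> (r * d)"
        unfolding Id gen_ideal_single by blast
      then show "y \<in> J"
      proof cases
        case 1 then show ?thesis unfolding J_def by (intro CollectI exI[of _ r] exI[of _ 0]) simp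
      next
        case 2 then show ?thesis unfolding J_def frob_mult[OF D]
          by (intro CollectI exI[of _ 0] exI[of _ "frob p \<delta> r"]) simp
      qed
    qed
    then have "of_nat p \<in> J" using gen_ideal_subset[OF JI] pI by blast
    then obtain a b where pab: "of_nat p = a * d + b * frob p \<delta> d" unfolding J_def by blast
    have "unit_elem (\<delta> d)"
    proof (rule ccontr)
      assume "\<not> unit_elem (\<delta> d)"
      then have ddm: "\<delta> d \<in> m" using loc[of "\<delta> d"] by blast
      have "1 - b * \<delta> d \<notin> m" by (rule one_minus_notin[OF mI mU ideal_multL[OF mI ddm]])
      then have "unit_elem (1 - b * \<delta> d)" by (rule loc)
      then obtain w where w: "(1 - b * \<delta> d) * w = 1" unfolding unit_elem_def by blast
      have dpow: "d ^ p = d ^ (p - 1) * d" using power_minus_mult[of p d] p1 by simp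
      have pab2: "a * d + b * (d ^ (p - 1) * d + of_nat p * \<delta> d) = of_nat p"
        using pab unfolding frob_def dpow by (rule sym)
      have "of_nat p * (1 - b * \<delta> d) = of_nat p - b * (of_nat p * \<delta> d)" by (simp add: algebra_simps)
      also have "\<dots> = (a * d + b * (d ^ (p - 1) * d + of_nat p * \<delta> d)) - b * (of_nat p * \<delta> d)"
        by (simp only: pab2)
      also have "\<dots> = (a + b * d ^ (p - 1)) * d" by (simp add: algebra_simps)
      finally have E: "of_nat p * (1 - b * \<delta> d) = (a + b * d ^ (p - 1)) * d" .
      have "(of_nat p :: 'a) = of_nat p * ((1 - b * \<delta> d) * w)" using w by simp
      also have "\<dots> = (of_nat p * (1 - b * \<delta> d)) * w" by (simp only: mult.assoc)
      also have "\<dots> = ((a + b * d ^ (p - 1)) * w) * d" unfolding E by (simp only: mult.assoc mult.commute[of d w])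
      finally have "(of_nat p :: 'a) = ((a + b * d ^ (p - 1)) * w) * d" .
      then have "\<delta> (of_nat p) = \<delta> (((a + b * d ^ (p - 1)) * w) * d)" by (rule arg_cong)
      also have "\<dots> \<in> m" by (rule delta_mult_in[OF D mI ddm dm p1])
      finally have "\<delta> (of_nat p) \<in> m" .
      with dp show False by contradiction
    qed
    then show P2 unfolding P2_def distinguished_def using dm Id by blast
  qed
  moreover have "P2 \<Longrightarrow> orientable_prism p \<delta> I"
  proof -
    assume P2
    then obtain d u where dm: "d \<in> m" and du: "\<delta> d * u = 1" and Id: "I = gen_ideal {d}"
      unfolding P2_def distinguished_def unit_elem_def by blast
    have d0: "d \<noteq> 0" using du D unfolding delta_structure_def by auto
    have Im: "I \<subseteq> m" unfolding Id using gen_ideal_subset[OF mI] dm by blast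
    have dI: "d \<in> I" unfolding Id using gen_ideal_base by blast
    have lf: "locally_free_rank_one I" unfolding locally_free_rank_one_def
    proof (intro exI[of _ "{1}"] conjI ballI)
      show "1 \<in> gen_ideal {1}" using gen_ideal_base by blast
      fix f :: 'a assume "f \<in> {1}"
      then have f1: "f = 1" by simp
      show "\<exists>g\<in>I. (\<forall>y\<in>I. \<exists>N c. f ^ N * y = c * g) \<and> (\<forall>c. (\<exists>M. f ^ M * (c * g) = 0) \<longrightarrow> (\<exists>K. f ^ K * c = 0))"
      proof (intro bexI[OF _ dI] conjI allI ballI impI)
        fix y assume "y \<in> I"
        then obtain r where "y = r * d" unfolding Id gen_ideal_single by blast
        then show "\<exists>N c. f ^ N * y = c * d" using f1 by auto
      next
        fix c assume "\<exists>M. f ^ M * (c * d) = 0"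
        then have "c = 0" using f1 d0 by simp
        then show "\<exists>K. f ^ K * c = 0" by simp
      qed
    qed auto
    have dcp: "derived_complete (gen_ideal (insert (of_nat p) I))" unfolding derived_complete_def
    proof (intro ballI)
      fix f assume "f \<in> gen_ideal (insert (of_nat p) I)"
      moreover have "gen_ideal (insert (of_nat p) I) \<subseteq> m"
        by (rule gen_ideal_subset[OF mI]) (use pm Im in blast)
      ultimately have "f \<in> m" by blast
      then show "derived_complete_elem f" by (rule dc_elem[OF ac])
    qed
    have pin: "of_nat p \<in> gen_ideal (I \<union> frob p \<delta> ` I)"
    proof -
      let ?G = "gen_ideal (I \<union> frob p \<delta> ` I)"
      have "d \<in> ?G" "frob p \<delta> d \<in> ?G" using subsetD[OF gen_ideal_base, of _ "I \<union> frob p \<delta> ` I"] dI by blast+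
      then have "u * frob p \<delta> d - (u * d ^ (p - 1)) * d \<in> ?G"
        by (intro ideal_diff[OF gen_ideal_ideal] ideal_multL[OF gen_ideal_ideal])
      moreover have "u * frob p \<delta> d - (u * d ^ (p - 1)) * d = of_nat p"
      proof -
        have dpow: "d ^ p = d ^ (p - 1) * d" using power_minus_mult[of p d] p1 by simp
        have "u * frob p \<delta> d - (u * d ^ (p - 1)) * d = of_nat p * (\<delta> d * u)"
          unfolding frob_def dpow by (simp add: algebra_simps)
        then show ?thesis using du by simp
      qed
      ultimately show ?thesis by simp
    qed
    show "orientable_prism p \<delta> I" unfolding orientable_prism_def prism_def
      using II lf dcp pin Id by blast
  qed
  moreover have "P2 \<Longrightarrow> (\<exists>f\<in>gen_ideal X. I = gen_ideal {of_nat p - f})"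
  proof -
    assume P2
    then obtain d where dm: "d \<in> m" and dd: "unit_elem (\<delta> d)" and Id: "I = gen_ideal {d}"
      unfolding P2_def distinguished_def by blast
    obtain a g where g: "g \<in> gen_ideal X" and dag: "d = a * of_nat p + g"
      using gen_ideal_insert[of d "of_nat p" X] dm unfolding mX by blast
    have gm: "g \<in> m" using g Xm by blast
    have "a \<notin> m"
    proof
      assume am: "a \<in> m"
      have apm: "a ^ p \<in> m" by (rule pow_in[OF mI am p1])
      have ppm: "(of_nat p :: 'a) ^ p \<in> m" by (rule pow_in[OF mI pm p1])
      have "\<delta> (a * of_nat p) = a ^ p * \<delta> (of_nat p) + (of_nat p) ^ p * \<delta> a + of_nat p * \<delta> a * \<delta> (of_nat p)"
        using D unfolding delta_structure_def by blast
      also have "\<dots> \<in> m" using apm ppm pm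
        by (intro ideal_add[OF mI] ideal_multR[OF mI])
      finally have d1: "\<delta> (a * of_nat p) \<in> m" .
      have "\<delta> (g + a * of_nat p) - \<delta> g - \<delta> (a * of_nat p) \<in> m" by (rule delta_add_mod[OF D mI gm])
      then have "\<delta> (g + a * of_nat p) \<in> m" using d1 dgen[OF g] ideal_add[OF mI] by (metis diff_add_cancel)
      then have "\<delta> d \<in> m" unfolding dag by (simp add: add.commute)
      then show False using unit_notin[OF mI mU dd] by blast
    qed
    then obtain b where ab: "a * b = 1" using loc unfolding unit_elem_def by blast
    have fX: "- (b * g) \<in> gen_ideal X"
      using ideal_diff[OF gen_ideal_ideal ideal_zero[OF gen_ideal_ideal] ideal_multL[OF gen_ideal_ideal g]]
      by simp
    have e1: "d = a * (of_nat p - - (b * g))" unfolding dag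
      by (simp add: algebra_simps ab mult.assoc[symmetric])
    have e2: "of_nat p - - (b * g) = b * d" unfolding dag
      by (simp add: algebra_simps ab mult.assoc[symmetric] mult.commute[of b a])
    have "I = gen_ideal {of_nat p - - (b * g)}"
      unfolding Id gen_ideal_single
    proof
      show "range (\<lambda>r. r * d) \<subseteq> range (\<lambda>r. r * (of_nat p - - (b * g)))"
      proof
        fix y assume "y \<in> range (\<lambda>r. r * d)"
        then obtain r where "y = r * d" by blast
        then have "y = (r * a) * (of_nat p - - (b * g))" by (simp only: e1[symmetric] mult.assoc)
        then show "y \<in> range (\<lambda>r. r * (of_nat p - - (b * g)))" by (rule image_eqI) simp
      qed
      show "range (\<lambda>r. r * (of_nat p - - (b * g))) \<subseteq> range (\<lambda>r. r * d)"
      proof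
        fix y assume "y \<in> range (\<lambda>r. r * (of_nat p - - (b * g)))"
        then obtain r where "y = r * (of_nat p - - (b * g))" by blast
        then have "y = (r * b) * d" by (simp only: e2 mult.assoc)
        then show "y \<in> range (\<lambda>r. r * d)" by (rule image_eqI) simp
      qed
    qed
    then show ?thesis using fX by blast
  qed
  moreover have "(\<exists>f\<in>gen_ideal X. I = gen_ideal {of_nat p - f}) \<Longrightarrow> P2"
  proof -
    assume "\<exists>f\<in>gen_ideal X. I = gen_ideal {of_nat p - f}"
    then obtain f where f: "f \<in> gen_ideal X" and If: "I = gen_ideal {of_nat p - f}" by blast
    have fm: "f \<in> m" using f Xm by blast
    have dm: "of_nat p - f \<in> m" by (rule ideal_diff[OF mI pm fm])
    have "unit_elem (\<delta> (of_nat p - f))"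
    proof (rule ccontr)
      assume "\<not> unit_elem (\<delta> (of_nat p - f))"
      then have h: "\<delta> (of_nat p - f) \<in> m" using loc by blast
      have "\<delta> (f + (of_nat p - f)) - \<delta> f - \<delta> (of_nat p - f) \<in> m" by (rule delta_add_mod[OF D mI fm])
      then have "\<delta> (f + (of_nat p - f)) \<in> m" using h dgen[OF f] ideal_add[OF mI] by (metis diff_add_cancel)
      then show False using dp by simp
    qed
    then show P2 unfolding P2_def distinguished_def using dm If by blast
  qed
  ultimately show ?thesis unfolding P2_def[symmetric] X_def[symmetric] by blast
qed

end
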